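(* Every skewly representable function $f:\mathbb{N}^k\to\mathbb{N}$ with finite range is strictly representable.
   Context: We work in the simply typed $\lambda$-calculus (type assignment to untyped $\lambda$-terms) with a single base type $o$, with $\beta\eta$-conversion as equality. For a type $\tau$, $\omega_\tau=(\tau\to\tau)\to\tau\to\tau$. The Church numeral of $n$ is $\rho(n)=\lambda f x.f^{n}x$; every type assignable to all Church numerals is of the form $\omega_\tau$. A function $f:\mathbb{N}^k\to\mathbb{N}$ is skewly representable if there exist a term $E$ and types $\alpha_1,\dots,\alpha_k,\beta$ (each a type of Church numerals) with $\vdash E:\alpha_1\to\cdots\to\alpha_k\to\beta$ such that $E\,\rho(n_1)\cdots\rho(n_k)=_{\beta\eta}\rho(f(n_1,\dots,n_k))$ for all $n_1,\dots,n_k$, where $\rho(n_i)$ is typed with $\alpha_i$. It is strictly representable if this holds with $\alpha_1=\cdots=\alpha_k=\beta=\omega_\tau$ for some type $\tau$. *)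

theory Defs
  imports Main
begin

datatype ty = O | Arr ty ty

datatype tm = Var nat | App tm tm | Abs tm

fun lift :: "tm \<Rightarrow> nat \<Rightarrow> tm" where
  "lift (Var i) k = (if i < k then Var i else Var (Suc i))"
| "lift (App s t) k = App (lift s k) (lift t k)"
| "lift (Abs s) k = Abs (lift s (Suc k))"

fun subst :: "tm \<Rightarrow> tm \<Rightarrow> nat \<Rightarrow> tm" where
  "subst (Var i) t k = (if k < i then Var (i - 1) else if i = k then t else Var i)"
| "subst (App s u) t k = App (subst s t k) (subst u t k)"
| "subst (Abs s) t k = Abs (subst s (lift t 0) (Suc k))"

inductive bestep :: "tm \<Rightarrow> tm \<Rightarrow> bool" where
  beta: "bestep (App (Abs s) t) (subst s t 0)"
| eta: "bestep (Abs (App (lift s 0) (Var 0))) s"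
| appL: "bestep s s' \<Longrightarrow> bestep (App s t) (App s' t)"
| appR: "bestep t t' \<Longrightarrow> bestep (App s t) (App s t')"
| abs: "bestep s s' \<Longrightarrow> bestep (Abs s) (Abs s')"

definition beq :: "tm \<Rightarrow> tm \<Rightarrow> bool" where
  "beq = equivclp bestep"

inductive typing :: "ty list \<Rightarrow> tm \<Rightarrow> ty \<Rightarrow> bool" where
  tvar: "i < length \<Gamma> \<Longrightarrow> typing \<Gamma> (Var i) (\<Gamma> ! i)"
| tapp: "typing \<Gamma> s (Arr T U) \<Longrightarrow> typing \<Gamma> t T \<Longrightarrow> typing \<Gamma> (App s t) U"
| tabs: "typing (T # \<Gamma>) s U \<Longrightarrow> typing \<Gamma> (Abs s) (Arr T U)"

definition omega :: "ty \<Rightarrow> ty" where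
  "omega \<tau> = Arr (Arr \<tau> \<tau>) (Arr \<tau> \<tau>)"

text \<open>Church numeral rho n = \<lambda>f x. f^n x  (f = Var 1, x = Var 0 under two binders).\<close>
definition church :: "nat \<Rightarrow> tm" where
  "church n = Abs (Abs ((App (Var 1) ^^ n) (Var 0)))"

definition apps :: "tm \<Rightarrow> tm list \<Rightarrow> tm" where
  "apps E ts = foldl App E ts"

definition arrs :: "ty list \<Rightarrow> ty \<Rightarrow> ty" where
  "arrs As B = foldr Arr As B"

text \<open>A function N^k \<rightarrow> N is modelled as f :: nat list \<Rightarrow> nat, relevant on lists of length k.
  Types of Church numerals are exactly the types omega \<tau>.\<close>
definition skewly_representable :: "nat \<Rightarrow> (nat list \<Rightarrow> nat) \<Rightarrow> bool" where
  "skewly_representable k f \<longleftrightarrow>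
     (\<exists>E \<tau>s \<sigma>. length \<tau>s = k \<and>
        typing [] E (arrs (map omega \<tau>s) (omega \<sigma>)) \<and>
        (\<forall>ns. length ns = k \<longrightarrow> beq (apps E (map church ns)) (church (f ns))))"

definition strictly_representable :: "nat \<Rightarrow> (nat list \<Rightarrow> nat) \<Rightarrow> bool" where
  "strictly_representable k f \<longleftrightarrow>
     (\<exists>E \<tau>. typing [] E (arrs (replicate k (omega \<tau>)) (omega \<tau>)) \<and>
        (\<forall>ns. length ns = k \<longrightarrow> beq (apps E (map church ns)) (church (f ns))))"

end

theory Submission
  imports Defs
begin


lemma beq_refl[simp, intro]: "beq t t"
  unfolding beq_def by (simp add: equivclp_def)

lemma beq_sym: "beq s t \<Longrightarrow> beq t s"
  unfolding beq_def by (rule equivclp_sym)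

lemma beq_trans[trans]: "beq s t \<Longrightarrow> beq t u \<Longrightarrow> beq s u"
  unfolding beq_def by (meson equivclp_trans)

lemma beq_step: "bestep s t \<Longrightarrow> beq s t"
  unfolding beq_def by (simp add: equivclp_def symclp_def r_into_rtranclp)

lemma equivclp_cong:
  assumes "equivclp r a b" and "\<And>x y. r x y \<Longrightarrow> r (h x) (h y)"
  shows "equivclp r (h a) (h b)"
  using assms(1) unfolding equivclp_def
proof (induction rule: rtranclp_induct)
  case base then show ?case by simp
next
  case (step y z)
  then have "symclp r (h y) (h z)" using assms(2) by (auto simp: symclp_def)
  with step show ?case by (meson rtranclp.rtrancl_into_rtrancl)
qed

lemma beq_AppL: "beq s s' \<Longrightarrow> beq (App s t) (App s' t)"
  unfolding beq_def by (rule equivclp_cong[where h="\<lambda>x. App x t"]) (auto intro: bestep.appL)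

lemma beq_AppR: "beq t t' \<Longrightarrow> beq (App s t) (App s t')"
  unfolding beq_def by (rule equivclp_cong[where h="\<lambda>x. App s x"]) (auto intro: bestep.appR)

lemma beq_App: "beq s s' \<Longrightarrow> beq t t' \<Longrightarrow> beq (App s t) (App s' t')"
  by (meson beq_AppL beq_AppR beq_trans)

lemma beq_Abs: "beq s s' \<Longrightarrow> beq (Abs s) (Abs s')"
  unfolding beq_def by (rule equivclp_cong[where h="Abs"]) (auto intro: bestep.abs)

lemma beq_beta: "beq (subst s t 0) u \<Longrightarrow> beq (App (Abs s) t) u"
  by (meson beq_step bestep.beta beq_trans)

lemma beq_beta': "beq (App (Abs s) t) (subst s t 0)"
  by (simp add: beq_step bestep.beta)

lemma beq_eta: "beq (Abs (App (lift s 0) (Var 0))) s"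
  by (simp add: beq_step bestep.eta)

lemma lift_lift:
    "i < k + 1 \<Longrightarrow> lift (lift t i) (Suc k) = lift (lift t k) i"
  by (induct t arbitrary: i k) auto

lemma lift_subst [simp]:
    "j < i + 1 \<Longrightarrow> lift (subst t s j) i = subst (lift t (i + 1)) (lift s i) j"
  by (induct t arbitrary: i j s)
    (simp_all add: diff_Suc lift_lift split: nat.split)

lemma lift_subst_lt:
    "i < j + 1 \<Longrightarrow> lift (subst t s j) i = subst (lift t i) (lift s i) (j + 1)"
  by (induct t arbitrary: i j s) (auto simp: lift_lift)

lemma subst_lift [simp]:
    "subst (lift t k) s k = t"
  by (induct t arbitrary: k s) simp_all

fun cl :: "nat \<Rightarrow> tm \<Rightarrow> bool" where
  "cl k (Var i) = (i < k)"
| "cl k (App s t) = (cl k s \<and> cl k t)"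
| "cl k (Abs s) = cl (Suc k) s"

lemma cl_mono: "cl k t \<Longrightarrow> k \<le> j \<Longrightarrow> cl j t"
  by (induct t arbitrary: k j) auto

lemma lift_cl: "cl k t \<Longrightarrow> k \<le> j \<Longrightarrow> lift t j = t"
  by (induct t arbitrary: k j) auto

lemma subst_cl: "cl k t \<Longrightarrow> k \<le> j \<Longrightarrow> subst t u j = t"
  by (induct t arbitrary: k j u) auto

lemma lift_cl0[simp]: "cl 0 t \<Longrightarrow> lift t j = t"
  using lift_cl by blast

lemma subst_cl0[simp]: "cl 0 t \<Longrightarrow> subst t u j = t"
  using subst_cl by blast

lemma typing_cl: "typing \<Gamma> t T \<Longrightarrow> cl (length \<Gamma>) t"
  by (induct rule: typing.induct) auto

lemma typing_cl0: "typing [] t T \<Longrightarrow> cl 0 t"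
  using typing_cl by fastforce

lemma typing_append: "typing \<Gamma> t T \<Longrightarrow> typing (\<Gamma> @ \<Delta>) t T"
proof (induct rule: typing.induct)
  case (tvar i \<Gamma>)
  then show ?case using typing.tvar[of i "\<Gamma> @ \<Delta>"] by (simp add: nth_append)
next
  case (tapp \<Gamma> s T U t) then show ?case by (auto intro: typing.tapp)
next
  case (tabs T \<Gamma> s U) then show ?case by (auto intro: typing.tabs)
qed

lemma typing_closed: "typing [] t T \<Longrightarrow> typing \<Gamma> t T"
  using typing_append[of "[]" t T \<Gamma>] by simp

lemma typing_lift:
  "typing \<Gamma> t T \<Longrightarrow> k \<le> length \<Gamma> \<Longrightarrow> typing (take k \<Gamma> @ U # drop k \<Gamma>) (lift t k) T"
proof (induct arbitrary: k rule: typing.induct)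
  case (tvar i \<Gamma>)
  show ?case
  proof (cases "i < k")
    case True
    then show ?thesis using tvar typing.tvar[of i "take k \<Gamma> @ U # drop k \<Gamma>"]
      by (simp add: nth_append)
  next
    case False
    then show ?thesis using tvar typing.tvar[of "Suc i" "take k \<Gamma> @ U # drop k \<Gamma>"]
      by (simp add: nth_append min_def)
  qed
next
  case (tapp \<Gamma> s T U' t) then show ?case by (auto intro: typing.tapp)
next
  case (tabs T \<Gamma> s U')
  from tabs(2)[of "Suc k"] tabs(3) show ?case by (auto intro: typing.tabs)
qed

lemma typing_lift0: "typing \<Gamma> t T \<Longrightarrow> typing (U # \<Gamma>) (lift t 0) T"
  using typing_lift[of \<Gamma> t T 0 U] by simp

fun tsub :: "ty \<Rightarrow> ty \<Rightarrow> ty" where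
  "tsub R ty.O = R"
| "tsub R (Arr A B) = Arr (tsub R A) (tsub R B)"

lemma typing_tsub: "typing \<Gamma> t T \<Longrightarrow> typing (map (tsub R) \<Gamma>) t (tsub R T)"
proof (induct rule: typing.induct)
  case (tvar i \<Gamma>)
  then show ?case using typing.tvar[of i "map (tsub R) \<Gamma>"] by simp
next
  case (tapp \<Gamma> s T U t) then show ?case by (auto intro: typing.tapp)
next
  case (tabs T \<Gamma> s U) then show ?case by (auto intro: typing.tabs)
qed

fun iter :: "tm \<Rightarrow> nat \<Rightarrow> tm \<Rightarrow> tm" where
  "iter a 0 b = b"
| "iter a (Suc j) b = App a (iter a j b)"

lemma funpow_iter: "(App a ^^ n) b = iter a n b"
  by (induct n) auto

lemma church_iter: "church n = Abs (Abs (iter (Var 1) n (Var 0)))"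
  by (simp add: church_def funpow_iter)

lemma lift_iter[simp]: "lift (iter a n b) k = iter (lift a k) n (lift b k)"
  by (induct n) auto

lemma subst_iter[simp]: "subst (iter a n b) u k = iter (subst a u k) n (subst b u k)"
  by (induct n) auto

lemma cl_iter[simp]: "cl k (iter a n b) = ((n = 0 \<or> cl k a) \<and> cl k b)"
  by (induct n) auto

lemma cl_church[simp]: "cl 0 (church n)"
  by (simp add: church_iter)

lemma church_app: "beq (App (App (church n) F) X) (iter F n X)"
proof -
  have "beq (App (church n) F) (Abs (iter (lift F 0) n (Var 0)))"
    unfolding church_iter by (rule beq_beta) simp
  then have "beq (App (App (church n) F) X) (App (Abs (iter (lift F 0) n (Var 0))) X)"
    by (rule beq_AppL)
  also have "beq \<dots> (iter F n X)" by (rule beq_beta) simp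
  finally show ?thesis .
qed

lemma beq_iter: "beq b b' \<Longrightarrow> beq (iter a n b) (iter a n b')"
  by (induct n) (auto intro: beq_AppR)

lemma typing_iter: "typing \<Gamma> a (Arr T T) \<Longrightarrow> typing \<Gamma> b T \<Longrightarrow> typing \<Gamma> (iter a n b) T"
  by (induct n) (auto intro: typing.tapp)



definition cv :: "(nat \<Rightarrow> bool) \<Rightarrow> ty \<Rightarrow> ty \<Rightarrow> bool" where
  "cv P A B \<longleftrightarrow> (\<exists>D. typing [] D (Arr (omega A) (omega B)) \<and>
      (\<forall>n. P n \<longrightarrow> beq (App D (church n)) (church n)))"

lemma cv_trans: assumes "cv P A B" "cv P B C" shows "cv P A C"
proof -
  obtain D1 where d1: "typing [] D1 (Arr (omega A) (omega B))" "\<forall>n. P n \<longrightarrow> beq (App D1 (church n)) (church n)"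
    using assms(1) cv_def by blast
  obtain D2 where d2: "typing [] D2 (Arr (omega B) (omega C))" "\<forall>n. P n \<longrightarrow> beq (App D2 (church n)) (church n)"
    using assms(2) cv_def by blast
  have c1: "cl 0 D1" "cl 0 D2" using d1 d2 typing_cl0 by auto
  let ?D = "Abs (App D2 (App D1 (Var 0)))"
  have "typing [] ?D (Arr (omega A) (omega C))"
    apply (rule typing.tabs)
    apply (rule typing.tapp[OF typing_closed[OF d2(1)]])
    apply (rule typing.tapp[OF typing_closed[OF d1(1)]])
    using typing.tvar[of 0 "[omega A]"] by simp
  moreover have "beq (App ?D (church n)) (church n)" if "P n" for n
  proof -
    have "beq (App ?D (church n)) (App D2 (App D1 (church n)))"
      by (rule beq_beta) (simp add: c1)
    also have "beq \<dots> (App D2 (church n))" using d1(2) that by (simp add: beq_AppR)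
    also have "beq \<dots> (church n)" using d2(2) that by simp
    finally show ?thesis .
  qed
  ultimately show ?thesis unfolding cv_def by blast
qed

lemma cv_mono: "cv (\<lambda>_. True) A B \<Longrightarrow> cv P A B"
  unfolding cv_def by blast

lemma cv_refl: "cv P A A"
proof -
  have "typing [] (Abs (Var 0)) (Arr (omega A) (omega A))"
    by (rule typing.tabs) (use typing.tvar[of 0 "[omega A]"] in simp)
  moreover have "beq (App (Abs (Var 0)) (church n)) (church n)" for n
    by (rule beq_beta) simp
  ultimately show ?thesis unfolding cv_def by blast
qed

lemma cv_intro:
  assumes cL: "cl 2 L" and cE: "cl 2 Enc" and cD: "cl 2 Dec"
    and tL: "typing [T, Arr T T] L (Arr \<tau> \<tau>)"
    and tE: "typing [T, Arr T T] Enc \<tau>"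
    and tD: "typing [T, Arr T T] Dec (Arr \<tau> T)"
    and red: "\<And>n. P n \<Longrightarrow> beq (App Dec (iter L n Enc)) (iter (Var 1) n (Var 0))"
  shows "cv P \<tau> T"
proof -
  let ?G = "[T, Arr T T, omega \<tau>]"
  let ?D = "Abs (Abs (Abs (App Dec (App (App (Var 2) L) Enc))))"
  have w: "typing ?G t U" if "typing [T, Arr T T] t U" for t U
    using typing_append[OF that, of "[omega \<tau>]"] by simp
  have "typing ?G (App Dec (App (App (Var 2) L) Enc)) T"
    apply (rule typing.tapp[OF w[OF tD]])
    apply (rule typing.tapp[OF _ w[OF tE]])
    apply (rule typing.tapp[OF _ w[OF tL]])
    using typing.tvar[of 2 ?G] by (simp add: omega_def)
  then have "typing [] ?D (Arr (omega \<tau>) (omega T))"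
    unfolding omega_def by (auto intro!: typing.tabs simp: omega_def)
  moreover have "beq (App ?D (church n)) (church n)" if "P n" for n
  proof -
    have s: "subst L u (Suc (Suc 0)) = L" "subst Enc u (Suc (Suc 0)) = Enc" "subst Dec u (Suc (Suc 0)) = Dec" for u
      using subst_cl cL cE cD by auto
    have "beq (App ?D (church n)) (Abs (Abs (App Dec (App (App (church n) L) Enc))))"
      by (rule beq_beta) (simp add: s)
    also have "beq \<dots> (Abs (Abs (App Dec (iter L n Enc))))"
      by (intro beq_Abs beq_AppR church_app)
    also have "beq \<dots> (church n)"
      unfolding church_iter by (intro beq_Abs red that)
    finally show ?thesis .
  qed
  ultimately show ?thesis unfolding cv_def by blast
qed



lemma tv: "i < length \<Gamma> \<Longrightarrow> \<Gamma> ! i = T \<Longrightarrow> typing \<Gamma> (Var i) T"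
  using typing.tvar by blast

lemma lift_lift0[simp]: "lift (lift t 0) (Suc k) = lift (lift t k) 0"
  by (simp add: lift_lift)

fun pr :: "tm \<Rightarrow> tm" where
  "pr (Var i) = Var i"
| "pr (Abs s) = Abs (pr s)"
| "pr (App (Abs s) t) = subst s t 0"
| "pr (App (Var i) t) = App (Var i) (pr t)"
| "pr (App (App a b) t) = App (pr (App a b)) (pr t)"

lemma beq_pr: "beq t (pr t)"
  by (induct t rule: pr.induct) (auto intro: beq_App beq_Abs beq_beta')

fun prs :: "nat \<Rightarrow> tm \<Rightarrow> tm" where
  "prs 0 t = t"
| "prs (Suc k) t = prs k (pr t)"

lemma beq_prs: "beq t (prs k t)"
  by (induct k arbitrary: t) (auto intro: beq_trans beq_pr)

lemma prsI: "prs k A = B \<Longrightarrow> beq A B"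
  using beq_prs by blast

lemma pr_iter[simp]: "pr (iter (Var i) j b) = iter (Var i) j (pr b)"
  by (induct j) auto

lemma pr_App_iter[simp]: "pr (App (iter (Var i) j (Var l)) t) = App (iter (Var i) j (Var l)) (pr t)"
  by (cases j) auto

lemma eta_iter: "beq (Abs (App (iter (Var (Suc a)) j (Var (Suc b))) (Var 0))) (iter (Var a) j (Var b))"
  using beq_eta[of "iter (Var a) j (Var b)"] by simp

lemma eta_iter': "a' = Suc a \<Longrightarrow> b' = Suc b \<Longrightarrow> beq (Abs (App (iter (Var a') j (Var b')) (Var 0))) (iter (Var a) j (Var b))"
  using eta_iter by simp

lemma cv_drop:
  assumes d: "typing [] d A"
  shows "cv P (Arr A C) C"
proof -
  have cd: "cl 0 d" using typing_cl0[OF d] .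
  let ?L = "Abs (Abs (App (Var 3) (App (Var 1) (Var 0))))"
  let ?E = "Abs (Var 1)"
  let ?D = "Abs (App (Var 0) d)"
  have claim: "beq (iter ?L j ?E) (Abs (iter (Var 2) j (Var 1)))" for j
  proof (induct j)
    case 0 then show ?case by simp
  next
    case (Suc j)
    have "beq (iter ?L (Suc j) ?E) (App ?L (Abs (iter (Var 2) j (Var 1))))"
      using Suc by (simp add: beq_AppR)
    also have "beq \<dots> (Abs (iter (Var 2) (Suc j) (Var 1)))"
      by (rule prsI[where k="Suc (Suc 0)"]) simp
    finally show ?case .
  qed
  show ?thesis
  proof (rule cv_intro[where L="?L" and Enc="?E" and Dec="?D"])
    show "cl 2 ?L" "cl 2 ?E" by auto
    show "cl 2 ?D" using cl_mono[OF cd] by auto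
    show "typing [C, Arr C C] ?L (Arr (Arr A C) (Arr A C))"
      by (rule typing.tabs typing.tapp tv | simp)+
    show "typing [C, Arr C C] ?E (Arr A C)"
      by (rule typing.tabs typing.tapp tv | simp)+
    show "typing [C, Arr C C] ?D (Arr (Arr A C) C)"
      by (rule typing.tabs typing.tapp tv typing_closed[OF d] | simp)+
    fix n
    have "beq (App ?D (iter ?L n ?E)) (App ?D (Abs (iter (Var 2) n (Var 1))))"
      using claim by (rule beq_AppR)
    also have "beq \<dots> (iter (Var 1) n (Var 0))"
      by (rule prsI[where k="Suc (Suc 0)"]) (simp add: cd)
    finally show "beq (App ?D (iter ?L n ?E)) (iter (Var 1) n (Var 0))" .
  qed
qed



fun DecT :: "ty \<Rightarrow> tm" where
  "DecT ty.O = Abs (App (Var 0) (Abs (Var 0)))"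
| "DecT (Arr A C) = Abs (Abs (App (DecT C) (Abs (App (Var 2) (Abs (App (Var 1) (App (Var 0) (Var 2))))))))"

lemma cl_DecT[simp]: "cl 0 (DecT T)"
  by (induct T) (auto intro: cl_mono)

lemma typing_DecT: "typing \<Gamma> (DecT T) (Arr (Arr (Arr T ty.O) ty.O) T)"
proof (induct T arbitrary: \<Gamma>)
  case O then show ?case by (rule typing.tabs typing.tapp tv | simp)+
next
  case (Arr A C)
  show ?case
    apply (simp only: DecT.simps)
    apply (rule typing.tabs typing.tabs)+
    apply (rule typing.tapp[OF Arr(2)])
    by (rule typing.tabs typing.tapp tv | simp)+
qed

lemma DecT_beq: "beq (App (DecT T) (Abs (App (Var 0) (lift X 0)))) X"
proof (induct T arbitrary: X)
  case O
  show ?case by (rule prsI[where k="Suc (Suc (Suc 0))"]) simp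
next
  case (Arr A C)
  let ?X' = "App (lift X 0) (Var 0)"
  have "beq (App (DecT (Arr A C)) (Abs (App (Var 0) (lift X 0))))
     (Abs (App (DecT C) (Abs (App (Abs (App (Var 0) (lift (lift (lift X 0) 0) 0)))
          (Abs (App (Var 1) (App (Var 0) (Var 2))))))))"
    by (simp only: DecT.simps(2), rule beq_beta) simp
  also have "beq \<dots> (Abs (App (DecT C) (Abs (App (Var 0) (lift ?X' 0)))))"
    apply (intro beq_Abs beq_AppR)
    by (rule prsI[where k="Suc (Suc 0)"]) simp
  also have "beq \<dots> (Abs ?X')"
    by (intro beq_Abs Arr(2))
  also have "beq \<dots> X" by (rule beq_eta)
  finally show ?case .
qed

lemma cv_cps: "cv P (Arr (Arr T ty.O) ty.O) T"
proof -
  let ?L = "Abs (Abs (App (Var 1) (Abs (App (Var 1) (App (Var 4) (Var 0))))))"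
  let ?E = "Abs (App (Var 0) (Var 1))"
  have claim: "beq (iter ?L j ?E) (Abs (App (Var 0) (lift (iter (Var 1) j (Var 0)) 0)))" for j
  proof (induct j)
    case 0 then show ?case by simp
  next
    case (Suc j)
    have "beq (iter ?L (Suc j) ?E) (App ?L (Abs (App (Var 0) (lift (iter (Var 1) j (Var 0)) 0))))"
      using Suc by (simp add: beq_AppR)
    also have "beq \<dots> (Abs (App (Var 0) (lift (iter (Var 1) (Suc j) (Var 0)) 0)))"
      by (rule prsI[where k="Suc (Suc (Suc 0))"]) simp
    finally show ?case .
  qed
  show ?thesis
  proof (rule cv_intro[where L="?L" and Enc="?E" and Dec="DecT T"])
    show "cl 2 ?L" "cl 2 ?E" by auto
    show "cl 2 (DecT T)" using cl_mono[OF cl_DecT] by auto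
    show "typing [T, Arr T T] ?L (Arr (Arr (Arr T ty.O) ty.O) (Arr (Arr T ty.O) ty.O))"
      by (rule typing.tabs typing.tapp tv | simp)+
    show "typing [T, Arr T T] ?E (Arr (Arr T ty.O) ty.O)"
      by (rule typing.tabs typing.tapp tv | simp)+
    show "typing [T, Arr T T] (DecT T) (Arr (Arr (Arr T ty.O) ty.O) T)"
      by (rule typing_DecT)
    fix n
    have "beq (App (DecT T) (iter ?L n ?E)) (App (DecT T) (Abs (App (Var 0) (lift (iter (Var 1) n (Var 0)) 0))))"
      using claim by (rule beq_AppR)
    also have "beq \<dots> (iter (Var 1) n (Var 0))"
      by (rule DecT_beq)
    finally show "beq (App (DecT T) (iter ?L n ?E)) (iter (Var 1) n (Var 0))" .
  qed
qed

definition J :: "ty \<Rightarrow> ty \<Rightarrow> ty" where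
  "J A B = Arr (Arr A ty.O) (Arr (Arr B ty.O) ty.O)"

lemma cv_join1: "cv P (J A B) (Arr (Arr A ty.O) ty.O)"
proof -
  let ?Tg = "Arr (Arr A ty.O) ty.O"
  let ?L = "Abs (Abs (Abs (App (App (Var 4) (Abs (App (App (Var 3) (Var 0)) (Var 1)))) (Var 1))))"
  let ?E = "Abs (Abs (App (Var 2) (Var 1)))"
  let ?D = "Abs (Abs (App (App (Var 1) (Var 0)) (Abs (App (Var 3) (Var 1)))))"
  have claim: "beq (iter ?L j ?E) (Abs (Abs (App (iter (Var 3) j (Var 2)) (Var 1))))" for j
  proof (induct j)
    case 0 then show ?case by simp
  next
    case (Suc j)
    have "beq (iter ?L (Suc j) ?E) (App ?L (Abs (Abs (App (iter (Var 3) j (Var 2)) (Var 1)))))"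
      using Suc by (simp add: beq_AppR)
    also have "beq \<dots> (Abs (Abs (App (App (Var 3) (Abs (App (iter (Var 4) j (Var 3)) (Var 0)))) (Var 1))))"
      by (rule prsI[where k="Suc (Suc (Suc 0))"]) simp
    also have "beq \<dots> (Abs (Abs (App (iter (Var 3) (Suc j) (Var 2)) (Var 1))))"
      by (simp, intro beq_Abs beq_AppL beq_AppR, rule eta_iter', simp_all)
    finally show ?case .
  qed
  show ?thesis unfolding J_def
  proof (rule cv_intro[where L="?L" and Enc="?E" and Dec="?D"])
    show "cl 2 ?L" "cl 2 ?E" "cl 2 ?D" by auto
    show "typing [?Tg, Arr ?Tg ?Tg] ?L (Arr (Arr (Arr A ty.O) (Arr (Arr B ty.O) ty.O)) (Arr (Arr A ty.O) (Arr (Arr B ty.O) ty.O)))"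
      by (rule typing.tabs typing.tapp tv | simp)+
    show "typing [?Tg, Arr ?Tg ?Tg] ?E (Arr (Arr A ty.O) (Arr (Arr B ty.O) ty.O))"
      by (rule typing.tabs typing.tapp tv | simp)+
    show "typing [?Tg, Arr ?Tg ?Tg] ?D (Arr (Arr (Arr A ty.O) (Arr (Arr B ty.O) ty.O)) ?Tg)"
      by (rule typing.tabs typing.tapp tv | simp)+
    fix n
    have "beq (App ?D (iter ?L n ?E)) (App ?D (Abs (Abs (App (iter (Var 3) n (Var 2)) (Var 1)))))"
      using claim by (rule beq_AppR)
    also have "beq \<dots> (Abs (App (iter (Var 2) n (Var 1)) (Var 0)))"
      by (rule prsI[where k="Suc (Suc (Suc 0))"]) simp
    also have "beq \<dots> (iter (Var 1) n (Var 0))"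
      by (rule eta_iter') simp_all
    finally show "beq (App ?D (iter ?L n ?E)) (iter (Var 1) n (Var 0))" .
  qed
qed



lemma cv_join2: "cv P (J A B) (Arr (Arr B ty.O) ty.O)"
proof -
  let ?Tg = "Arr (Arr B ty.O) ty.O"
  let ?L = "Abs (Abs (Abs (App (App (Var 4) (Abs (App (App (Var 3) (Var 2)) (Var 0)))) (Var 0))))"
  let ?E = "Abs (Abs (App (Var 2) (Var 0)))"
  let ?D = "Abs (Abs (App (App (Var 1) (Abs (App (Var 3) (Var 1)))) (Var 0)))"
  have claim: "beq (iter ?L j ?E) (Abs (Abs (App (iter (Var 3) j (Var 2)) (Var 0))))" for j
  proof (induct j)
    case 0 then show ?case by simp
  next
    case (Suc j)
    have "beq (iter ?L (Suc j) ?E) (App ?L (Abs (Abs (App (iter (Var 3) j (Var 2)) (Var 0)))))"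
      using Suc by (simp add: beq_AppR)
    also have "beq \<dots> (Abs (Abs (App (App (Var 3) (Abs (App (iter (Var 4) j (Var 3)) (Var 0)))) (Var 0))))"
      by (rule prsI[where k="Suc (Suc (Suc 0))"]) simp
    also have "beq \<dots> (Abs (Abs (App (iter (Var 3) (Suc j) (Var 2)) (Var 0))))"
      by (simp, intro beq_Abs beq_AppL beq_AppR, rule eta_iter', simp_all)
    finally show ?case .
  qed
  show ?thesis unfolding J_def
  proof (rule cv_intro[where L="?L" and Enc="?E" and Dec="?D"])
    show "cl 2 ?L" "cl 2 ?E" "cl 2 ?D" by auto
    show "typing [?Tg, Arr ?Tg ?Tg] ?L (Arr (Arr (Arr A ty.O) (Arr (Arr B ty.O) ty.O)) (Arr (Arr A ty.O) (Arr (Arr B ty.O) ty.O)))"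
      by (rule typing.tabs typing.tapp tv | simp)+
    show "typing [?Tg, Arr ?Tg ?Tg] ?E (Arr (Arr A ty.O) (Arr (Arr B ty.O) ty.O))"
      by (rule typing.tabs typing.tapp tv | simp)+
    show "typing [?Tg, Arr ?Tg ?Tg] ?D (Arr (Arr (Arr A ty.O) (Arr (Arr B ty.O) ty.O)) ?Tg)"
      by (rule typing.tabs typing.tapp tv | simp)+
    fix n
    have "beq (App ?D (iter ?L n ?E)) (App ?D (Abs (Abs (App (iter (Var 3) n (Var 2)) (Var 0)))))"
      using claim by (rule beq_AppR)
    also have "beq \<dots> (Abs (App (iter (Var 2) n (Var 1)) (Var 0)))"
      by (rule prsI[where k="Suc (Suc (Suc 0))"]) simp
    also have "beq \<dots> (iter (Var 1) n (Var 0))"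
      by (rule eta_iter') simp_all
    finally show "beq (App ?D (iter ?L n ?E)) (iter (Var 1) n (Var 0))" .
  qed
qed

lemma cv_J1: "cv P (J A B) A"
  using cv_trans[OF cv_join1 cv_cps] .

lemma cv_J2: "cv P (J A B) B"
  using cv_trans[OF cv_join2 cv_cps] .

fun top :: "ty list \<Rightarrow> ty" where
  "top [] = J ty.O ty.O"
| "top (T # Ts) = J T (top Ts)"

lemma cv_top: "T \<in> set Ts \<Longrightarrow> cv P (top Ts) T"
proof (induct Ts)
  case Nil then show ?case by simp
next
  case (Cons U Us)
  then show ?case
    by (auto intro: cv_J1 cv_trans[OF cv_J2])
qed

lemma top_J: "\<exists>X Y. top Ts = J X Y"
  by (cases Ts) auto



lemma apps_Nil[simp]: "apps t [] = t" by (simp add: apps_def)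
lemma apps_Cons[simp]: "apps t (y # ys) = apps (App t y) ys" by (simp add: apps_def)

lemma subst_apps[simp]: "subst (apps t ys) u k = apps (subst t u k) (map (\<lambda>y. subst y u k) ys)"
  by (induct ys arbitrary: t) auto

lemma cl_apps[simp]: "cl k (apps t ys) = (cl k t \<and> (\<forall>y\<in>set ys. cl k y))"
  by (induct ys arbitrary: t) auto

lemma beq_apps_head: "beq s s' \<Longrightarrow> beq (apps s ys) (apps s' ys)"
  by (induct ys arbitrary: s s') (auto intro: beq_AppL)

lemma typing_apps: "typing \<Gamma> t (arrs As T) \<Longrightarrow> list_all2 (typing \<Gamma>) ys As \<Longrightarrow> typing \<Gamma> (apps t ys) T"
proof (induct ys arbitrary: t As)
  case Nil then show ?case by (simp add: arrs_def)
next
  case (Cons y ys)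
  then obtain A As' where As: "As = A # As'" by (cases As) auto
  with Cons show ?case by (auto simp: arrs_def intro: typing.tapp)
qed

fun absn :: "nat \<Rightarrow> tm \<Rightarrow> tm" where
  "absn 0 t = t"
| "absn (Suc q) t = Abs (absn q t)"

fun lz :: "nat \<Rightarrow> tm \<Rightarrow> tm" where
  "lz 0 u = u"
| "lz (Suc q) u = lift (lz q u) 0"

lemma lz_lift: "lz q (lift u 0) = lift (lz q u) 0"
  by (induct q) auto

lemma subst_absn: "subst (absn q t) u k = absn q (subst t (lz q u) (k + q))"
  by (induct q arbitrary: k u) (auto simp: lz_lift)

lemma lift_lz: "k \<le> q \<Longrightarrow> lift (lz q y) k = lz (Suc q) y"
proof (induct q arbitrary: k)
  case 0 then show ?case by simp
next
  case (Suc q)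
  show ?case
  proof (cases k)
    case 0 then show ?thesis by simp
  next
    case (Suc k')
    then have "k' \<le> q" using Suc.prems by simp
    have "lift (lz (Suc q) y) k = lift (lift (lz q y) k') 0"
      using Suc by (simp only: lz.simps lift_lift0)
    also have "\<dots> = lift (lz (Suc q) y) 0" using Suc.hyps[OF \<open>k' \<le> q\<close>] by simp
    finally show ?thesis by (simp only: lz.simps)
  qed
qed

lemma lz_cl[simp]: "cl 0 u \<Longrightarrow> lz q u = u"
  by (induct q) auto

lemma cl_absn[simp]: "cl k (absn q t) = cl (k + q) t"
  by (induct q arbitrary: k) auto

lemma beq_absn: "beq s s' \<Longrightarrow> beq (absn q s) (absn q s')"
  by (induct q) (auto intro: beq_Abs)

lemma typing_absn: "typing (rev As @ \<Gamma>) t T \<Longrightarrow> typing \<Gamma> (absn (length As) t) (arrs As T)"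
proof (induct As arbitrary: \<Gamma>)
  case Nil then show ?case by (simp add: arrs_def)
next
  case (Cons A As)
  from Cons(2) have "typing (rev As @ A # \<Gamma>) t T" by simp
  from Cons(1)[OF this] show ?case by (auto simp: arrs_def intro: typing.tabs)
qed

lemma apps_beta: "beq (apps (App (Abs s) t) ys) (apps (subst s t 0) ys)"
  by (rule beq_apps_head) (rule beq_beta')

lemma P2: "length ys = q \<Longrightarrow> beq (apps (absn q (lz q y)) ys) y"
proof (induct q arbitrary: ys)
  case 0 then show ?case by simp
next
  case (Suc q)
  then obtain z zs where ys: "ys = z # zs" and l: "length zs = q" by (cases ys) auto
  have e: "lz (Suc q) y = lift (lz q y) q" using lift_lz[of q q y] by simp
  have "beq (apps (absn (Suc q) (lz (Suc q) y)) ys) (apps (subst (absn q (lz (Suc q) y)) z 0) zs)"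
    using ys apps_beta by simp
  also have "subst (absn q (lz (Suc q) y)) z 0 = absn q (lz q y)"
    by (simp only: subst_absn e add_0 subst_lift)
  also have "beq (apps (absn q (lz q y)) zs) y" using Suc(1)[OF l] .
  finally show ?case .
qed

lemma P1: "v < q \<Longrightarrow> length ys = q \<Longrightarrow> beq (apps (absn q (Var v)) ys) (ys ! (q - Suc v))"
proof (induct q arbitrary: ys v)
  case 0 then show ?case by simp
next
  case (Suc q)
  then obtain z zs where ys: "ys = z # zs" and l: "length zs = q" by (cases ys) auto
  have "beq (apps (absn (Suc q) (Var v)) ys) (apps (subst (absn q (Var v)) z 0) zs)"
    using ys apps_beta by simp
  also have "subst (absn q (Var v)) z 0 = absn q (subst (Var v) (lz q z) q)"
    by (simp add: subst_absn)
  finally have 1: "beq (apps (absn (Suc q) (Var v)) ys) (apps (absn q (subst (Var v) (lz q z) q)) zs)" .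
  show ?case
  proof (cases "v < q")
    case True
    then have "beq (apps (absn q (subst (Var v) (lz q z) q)) zs) (zs ! (q - Suc v))"
      using Suc(1)[OF True l] by simp
    moreover have "zs ! (q - Suc v) = ys ! (Suc q - Suc v)"
      using True ys by (simp add: Suc_diff_Suc)
    ultimately show ?thesis using 1 beq_trans by metis
  next
    case False
    then have v: "v = q" using Suc(2) by simp
    have "beq (apps (absn q (subst (Var v) (lz q z) q)) zs) z"
      using P2[OF l] v by simp
    then show ?thesis using 1 beq_trans ys v by auto
  qed
qed

definition S :: "nat \<Rightarrow> ty" where
  "S M = arrs (replicate (Suc M) ty.O) ty.O"

definition pj :: "nat \<Rightarrow> nat \<Rightarrow> tm" where
  "pj M j = absn (Suc M) (Var (M - j))"

definition shargs :: "nat \<Rightarrow> tm list" where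
  "shargs M = map (\<lambda>i. Var (M - Suc i)) [0..<M] @ [Var 0]"

definition sh :: "nat \<Rightarrow> tm" where
  "sh M = Abs (absn (Suc M) (apps (Var (Suc M)) (shargs M)))"

lemma cl_pj[simp]: "cl 0 (pj M j)"
  by (simp add: pj_def)

lemma cl_sh[simp]: "cl 0 (sh M)"
  by (auto simp: sh_def shargs_def)

lemma typing_pj: "typing \<Gamma> (pj M j) (S M)"
proof -
  have "typing (rev (replicate (Suc M) ty.O) @ \<Gamma>) (Var (M - j)) ty.O"
    by (rule tv) (simp_all add: nth_append)
  from typing_absn[OF this] show ?thesis unfolding pj_def S_def by simp
qed

lemma len_shargs[simp]: "length (shargs M) = Suc M"
  by (simp add: shargs_def)

lemma typing_sh: "typing \<Gamma> (sh M) (Arr (S M) (S M))"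
proof -
  let ?G = "rev (replicate (Suc M) ty.O) @ S M # \<Gamma>"
  have "typing ?G (Var (Suc M)) (arrs (replicate (Suc M) ty.O) ty.O)"
    by (rule tv) (auto simp: nth_append S_def)
  moreover have "list_all2 (typing ?G) (shargs M) (replicate (Suc M) ty.O)"
    unfolding list_all2_conv_all_nth
    by (auto simp: shargs_def nth_append nth_Cons' intro!: tv)
  ultimately have "typing ?G (apps (Var (Suc M)) (shargs M)) ty.O"
    by (rule typing_apps)
  then show ?thesis
    unfolding sh_def
    using typing_absn[of "replicate (Suc M) ty.O" "S M # \<Gamma>"]
    by (auto intro!: typing.tabs simp: S_def)
qed

lemma shargs_nth: "j \<le> M \<Longrightarrow> shargs M ! j = Var (M - min (Suc j) M)"
  by (auto simp: shargs_def nth_append min_def)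

lemma map_subst_shargs: "map (\<lambda>y. subst y u (Suc M)) (shargs M) = shargs M"
  by (auto simp: shargs_def)

lemma sh_pj: "j \<le> M \<Longrightarrow> beq (App (sh M) (pj M j)) (pj M (min (Suc j) M))"
proof -
  assume j: "j \<le> M"
  have "beq (App (sh M) (pj M j)) (absn (Suc M) (apps (pj M j) (shargs M)))"
    unfolding sh_def
    by (rule beq_beta, simp add: subst_absn map_subst_shargs)
  also have "beq \<dots> (absn (Suc M) (shargs M ! (Suc M - Suc (M - j))))"
    unfolding pj_def by (rule beq_absn, rule P1) auto
  also have "shargs M ! (Suc M - Suc (M - j)) = Var (M - min (Suc j) M)"
    using j by (simp add: shargs_nth)
  finally show ?thesis by (simp add: pj_def)
qed

lemma iter_sh: "beq (iter (sh M) m (pj M 0)) (pj M (min m M))"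
proof (induct m)
  case 0 then show ?case by simp
next
  case (Suc m)
  have "beq (iter (sh M) (Suc m) (pj M 0)) (App (sh M) (pj M (min m M)))"
    using Suc by (simp add: beq_AppR)
  also have "beq \<dots> (pj M (min (Suc (min m M)) M))" by (rule sh_pj) simp
  also have "min (Suc (min m M)) M = min (Suc m) M" by (simp add: min_def)
  finally show ?case .
qed



definition ysM :: "nat \<Rightarrow> tm list" where
  "ysM M = map (\<lambda>j. App (App (iter (Var 3) j (Var 2)) (Var 1)) (Var 0)) [0..<Suc M]"

lemma cv_out: "cv (\<lambda>n. n \<le> M) (S M) (J X Y)"
proof -
  let ?t = "J X Y"
  let ?body = "apps (App (App (Var 4) (sh M)) (pj M 0)) (ysM M)"
  let ?Out = "Abs (Abs (Abs (Abs (Abs ?body))))"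
  let ?G = "[Arr Y ty.O, Arr X ty.O, ?t, Arr ?t ?t, omega (S M)]"
  have "typing ?G (App (App (Var 4) (sh M)) (pj M 0)) (arrs (replicate (Suc M) ty.O) ty.O)"
    apply (rule typing.tapp[OF _ typing_pj])
    apply (rule typing.tapp[OF _ typing_sh])
    by (rule tv) (auto simp: omega_def S_def)
  moreover have "list_all2 (typing ?G) (ysM M) (replicate (Suc M) ty.O)"
    unfolding list_all2_conv_all_nth ysM_def
  proof (intro conjI allI impI)
    fix i assume "i < length (map (\<lambda>j. App (App (iter (Var 3) j (Var 2)) (Var 1)) (Var 0)) [0..<Suc M])"
    then have i: "i < Suc M" by simp
    have "typing ?G (iter (Var 3) i (Var 2)) ?t"
      by (rule typing_iter) (rule tv, simp_all)+
    then have "typing ?G (App (App (iter (Var 3) i (Var 2)) (Var 1)) (Var 0)) ty.O"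
      unfolding J_def
      by (rule typing.tapp[OF typing.tapp]) (rule tv, simp_all)+
    then show "typing ?G (map (\<lambda>j. App (App (iter (Var 3) j (Var 2)) (Var 1)) (Var 0)) [0..<Suc M] ! i) (replicate (Suc M) ty.O ! i)"
      using i by (simp del: upt_Suc replicate_Suc)
  qed simp
  ultimately have tb: "typing ?G ?body ty.O" by (rule typing_apps)
  have "typing [] ?Out (Arr (omega (S M)) (omega ?t))"
    using tb unfolding J_def omega_def[of "Arr (Arr X ty.O) (Arr (Arr Y ty.O) ty.O)"]
    by (intro typing.tabs)
  moreover have "beq (App ?Out (church m)) (church m)" if m: "m \<le> M" for m
  proof -
    have e1: "map (\<lambda>y. subst y (church m) (Suc (Suc (Suc (Suc 0))))) (ysM M) = ysM M"
      by (simp add: ysM_def)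
    have "beq (App ?Out (church m)) (Abs (Abs (Abs (Abs (apps (App (App (church m) (sh M)) (pj M 0)) (ysM M))))))"
      by (rule beq_beta) (simp add: e1)
    also have "beq \<dots> (Abs (Abs (Abs (Abs (apps (pj M m) (ysM M))))))"
    proof (intro beq_Abs beq_apps_head)
      have "beq (App (App (church m) (sh M)) (pj M 0)) (iter (sh M) m (pj M 0))" by (rule church_app)
      also have "beq \<dots> (pj M m)" using iter_sh[of M m] m by (simp add: min_def)
      finally show "beq (App (App (church m) (sh M)) (pj M 0)) (pj M m)" .
    qed
    also have "beq \<dots> (Abs (Abs (Abs (Abs (ysM M ! (Suc M - Suc (M - m)))))))"
      unfolding pj_def by (intro beq_Abs P1) (auto simp: ysM_def)
    also have "ysM M ! (Suc M - Suc (M - m)) = App (App (iter (Var 3) m (Var 2)) (Var 1)) (Var 0)"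
      using m by (simp add: ysM_def nth_append del: upt_Suc)
    also have "beq (Abs (Abs (Abs (Abs (App (App (iter (Var 3) m (Var 2)) (Var 1)) (Var 0))))))
        (Abs (Abs (Abs (App (iter (Var 2) m (Var 1)) (Var 0)))))"
    proof -
      have h: "lift (App (iter (Var 2) m (Var 1)) (Var 0)) 0 = App (iter (Var 3) m (Var 2)) (Var 1)" by (simp add: numeral_2_eq_2 numeral_3_eq_3)
      show ?thesis using beq_eta[of "App (iter (Var 2) m (Var 1)) (Var 0)"] unfolding h
        by (intro beq_Abs)
    qed
    also have "beq \<dots> (Abs (Abs (iter (Var 1) m (Var 0))))"
      by (intro beq_Abs, rule eta_iter') simp_all
    also have "\<dots> = church m" by (simp add: church_iter)
    finally show ?thesis .
  qed
  ultimately show ?thesis unfolding cv_def by blast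
qed

fun inh :: "nat \<Rightarrow> ty \<Rightarrow> tm" where
  "inh M ty.O = pj M 0"
| "inh M (Arr A C) = Abs (inh M C)"

lemma typing_inh: "typing \<Gamma> (inh M A) (tsub (S M) A)"
  by (induct A arbitrary: \<Gamma>) (auto intro: typing.tabs typing_pj)

lemma cv_tsub: "cv P (tsub (S M) \<sigma>) (S M)"
proof (induct \<sigma>)
  case O then show ?case by (simp add: cv_refl)
next
  case (Arr A C)
  then show ?case using cv_trans[OF cv_drop[OF typing_inh] Arr(2)] by simp
qed

lemma cv_output: "cv (\<lambda>n. n \<le> M) (tsub (S M) \<sigma>) (top Ts)"
proof -
  obtain X Y where "top Ts = J X Y" using top_J by blast
  then show ?thesis using cv_trans[OF cv_tsub cv_out] by simp
qed

fun wrap :: "tm list \<Rightarrow> tm \<Rightarrow> tm \<Rightarrow> tm" where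
  "wrap [] Q X = App Q X"
| "wrap (D # Ds) Q X = Abs (wrap Ds Q (App (lift X 0) (App D (Var 0))))"

lemma subst_wrap:
  "\<forall>D\<in>set Ds. cl 0 D \<Longrightarrow> cl 0 Q \<Longrightarrow> cl 0 c \<Longrightarrow> subst (wrap Ds Q X) c j = wrap Ds Q (subst X c j)"
proof (induct Ds arbitrary: X j)
  case Nil then show ?case by simp
next
  case (Cons D Ds)
  have "subst (lift X 0) c (Suc j) = lift (subst X c j) 0"
    using lift_subst_lt[of 0 j X c] Cons by simp
  then show ?case using Cons by simp
qed

fun appD :: "tm list \<Rightarrow> nat list \<Rightarrow> tm \<Rightarrow> tm" where
  "appD (D # Ds) (n # ns) X = appD Ds ns (App X (App D (church n)))"
| "appD _ _ X = X"

lemma wrap_apps: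
  "\<forall>D\<in>set Ds. cl 0 D \<Longrightarrow> cl 0 Q \<Longrightarrow> length ns = length Ds \<Longrightarrow>
   beq (apps (wrap Ds Q X) (map church ns)) (App Q (appD Ds ns X))"
proof (induct Ds arbitrary: ns X)
  case Nil then show ?case by simp
next
  case (Cons D Ds)
  then obtain n ns' where ns: "ns = n # ns'" "length ns' = length Ds" by (cases ns) auto
  have "beq (apps (wrap (D # Ds) Q X) (map church ns))
      (apps (subst (wrap Ds Q (App (lift X 0) (App D (Var 0)))) (church n) 0) (map church ns'))"
    using ns apps_beta by simp
  also have "subst (wrap Ds Q (App (lift X 0) (App D (Var 0)))) (church n) 0
      = wrap Ds Q (App X (App D (church n)))"
    using Cons by (simp add: subst_wrap)
  also have "beq (apps (wrap Ds Q (App X (App D (church n)))) (map church ns')) (App Q (appD Ds ns' (App X (App D (church n)))))"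
    using Cons ns by simp
  finally show ?case using ns by simp
qed

lemma appD_cong: "beq X X' \<Longrightarrow> beq (appD Ds ns X) (appD Ds ns X')"
  by (induct Ds ns X arbitrary: X' rule: appD.induct) (auto intro: beq_AppL)

lemma appD_beq:
  "\<forall>D\<in>set Ds. \<forall>n. beq (App D (church n)) (church n) \<Longrightarrow> length ns = length Ds \<Longrightarrow>
   beq (appD Ds ns X) (apps X (map church ns))"
proof (induct Ds arbitrary: ns X)
  case Nil then show ?case by simp
next
  case (Cons D Ds)
  then obtain n ns' where ns: "ns = n # ns'" "length ns' = length Ds" by (cases ns) auto
  have "beq (appD (D # Ds) ns X) (appD Ds ns' (App X (church n)))"
    using ns Cons by (simp add: appD_cong beq_AppR)
  also have "beq \<dots> (apps (App X (church n)) (map church ns'))" using Cons ns by simp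
  finally show ?case using ns by simp
qed

lemma typing_wrap:
  "typing \<Gamma> X (arrs (map omega Us) (omega \<sigma>)) \<Longrightarrow>
   list_all2 (\<lambda>D U. typing [] D (Arr (omega \<tau>) (omega U))) Ds Us \<Longrightarrow>
   typing [] Q (Arr (omega \<sigma>) (omega \<tau>)) \<Longrightarrow>
   typing \<Gamma> (wrap Ds Q X) (arrs (replicate (length Ds) (omega \<tau>)) (omega \<tau>))"
proof (induct Ds arbitrary: Us \<Gamma> X)
  case Nil
  then show ?case by (auto simp: arrs_def intro: typing.tapp typing_closed)
next
  case (Cons D Ds)
  obtain U Us' where Us: "Us = U # Us'" and r: "list_all2 (\<lambda>D U. typing [] D (Arr (omega \<tau>) (omega U))) Ds Us'"
    and d: "typing [] D (Arr (omega \<tau>) (omega U))"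
    using Cons.prems(2) by (auto simp: list_all2_Cons1)
  have "typing (omega \<tau> # \<Gamma>) (lift X 0) (Arr (omega U) (arrs (map omega Us') (omega \<sigma>)))"
    using typing_lift0[OF Cons(2)] Us by (simp add: arrs_def)
  moreover have "typing (omega \<tau> # \<Gamma>) (App D (Var 0)) (omega U)"
    by (rule typing.tapp[OF typing_closed[OF d]]) (rule tv, simp_all)
  ultimately have "typing (omega \<tau> # \<Gamma>) (App (lift X 0) (App D (Var 0))) (arrs (map omega Us') (omega \<sigma>))"
    by (rule typing.tapp)
  from Cons(1)[OF this r Cons(4)] show ?case
    by (auto simp: arrs_def intro: typing.tabs)
qed

lemma tsub_arrs: "tsub R (arrs As B) = arrs (map (tsub R) As) (tsub R B)"
  by (induct As) (auto simp: arrs_def)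

lemma tsub_omega: "tsub R (omega T) = omega (tsub R T)"
  by (simp add: omega_def)



theorem theorem4:
  fixes k :: nat and f :: "nat list \<Rightarrow> nat"
  assumes "skewly_representable k f"
    and "finite (f ` {ns. length ns = k})"
  shows "strictly_representable k f"
proof -
  obtain E \<tau>s \<sigma> where len: "length \<tau>s = k"
    and tE: "typing [] E (arrs (map omega \<tau>s) (omega \<sigma>))"
    and rE: "\<forall>ns. length ns = k \<longrightarrow> beq (apps E (map church ns)) (church (f ns))"
    using assms(1) unfolding skewly_representable_def by blast
  define M where "M = Max (f ` {ns. length ns = k})"
  have fM: "f ns \<le> M" if "length ns = k" for ns
    unfolding M_def using assms(2) that by (intro Max_ge) auto
  define Ts where "Ts = map (tsub (S M)) \<tau>s"
  define \<sigma>' where "\<sigma>' = tsub (S M) \<sigma>"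
  have tE': "typing [] E (arrs (map omega Ts) (omega \<sigma>'))"
    using typing_tsub[OF tE, of "S M"]
    by (simp add: tsub_arrs tsub_omega Ts_def \<sigma>'_def comp_def)
  define \<tau> where "\<tau> = top Ts"
  have "\<forall>i. \<exists>D. i < k \<longrightarrow> typing [] D (Arr (omega \<tau>) (omega (Ts ! i))) \<and>
      (\<forall>n. beq (App D (church n)) (church n))"
  proof
    fix i
    show "\<exists>D. i < k \<longrightarrow> typing [] D (Arr (omega \<tau>) (omega (Ts ! i))) \<and>
      (\<forall>n. beq (App D (church n)) (church n))"
    proof (cases "i < k")
      case True
      then have "Ts ! i \<in> set Ts" using len Ts_def by simp
      then have "cv (\<lambda>_. True) \<tau> (Ts ! i)" unfolding \<tau>_def by (rule cv_top)
      then show ?thesis unfolding cv_def by blast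
    qed simp
  qed
  then obtain Df where Df: "\<And>i. i < k \<Longrightarrow> typing [] (Df i) (Arr (omega \<tau>) (omega (Ts ! i))) \<and>
      (\<forall>n. beq (App (Df i) (church n)) (church n))"
    by metis
  obtain Q where tQ: "typing [] Q (Arr (omega \<sigma>') (omega \<tau>))"
    and rQ: "\<forall>n. n \<le> M \<longrightarrow> beq (App Q (church n)) (church n)"
    using cv_output[of M \<sigma> Ts] unfolding cv_def \<sigma>'_def \<tau>_def by blast
  define Ds where "Ds = map Df [0..<k]"
  have lDs: "length Ds = k" by (simp add: Ds_def)
  have lTs: "length Ts = k" by (simp add: Ts_def len)
  have clDs: "\<forall>D\<in>set Ds. cl 0 D" using Df typing_cl0 by (fastforce simp: Ds_def)
  have clQ: "cl 0 Q" using tQ typing_cl0 by blast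
  have rDs: "\<forall>D\<in>set Ds. \<forall>n. beq (App D (church n)) (church n)" using Df by (auto simp: Ds_def)
  have la: "list_all2 (\<lambda>D U. typing [] D (Arr (omega \<tau>) (omega U))) Ds Ts"
    unfolding list_all2_conv_all_nth using lDs lTs Df by (auto simp: Ds_def)
  have "typing [] (wrap Ds Q E) (arrs (replicate k (omega \<tau>)) (omega \<tau>))"
    using typing_wrap[OF tE' la tQ] lDs by simp
  moreover have "beq (apps (wrap Ds Q E) (map church ns)) (church (f ns))" if ns: "length ns = k" for ns
  proof -
    have "beq (apps (wrap Ds Q E) (map church ns)) (App Q (appD Ds ns E))"
      using wrap_apps[OF clDs clQ] ns lDs by simp
    also have "beq \<dots> (App Q (apps E (map church ns)))"
      using appD_beq[OF rDs] ns lDs by (simp add: beq_AppR)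
    also have "beq \<dots> (App Q (church (f ns)))" using rE ns by (simp add: beq_AppR)
    also have "beq \<dots> (church (f ns))" using rQ fM[OF ns] by simp
    finally show ?thesis .
  qed
  ultimately show ?thesis unfolding strictly_representable_def by blast
qed

end
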